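(* Haechi (described in the context) provides finalization fairness for a sharded system: for any order-sensitive contract $\epsilon$ and any two transactions $TX^1_{\mapsto\epsilon_1}$, $TX^2_{\mapsto\epsilon_2}$ with $\epsilon\in\Upsilon(TX^1_{\mapsto\epsilon_1})\cap\Upsilon(TX^2_{\mapsto\epsilon_2})$, if $TX^1_{\mapsto\epsilon_1}\prec_{\mathbf P} TX^2_{\mapsto\epsilon_2}$ then $TX^1_{\mapsto\epsilon_1}\prec_{\mathbf E} TX^2_{\mapsto\epsilon_2}$.
   Context: Setting. A sharded blockchain has shards $S_1,\dots,S_m$, each running a BFT consensus with fewer than one third Byzantine nodes, plus a beacon shard $S_0$ maintaining a beacon chain. Shard $S_i$ maintains a chain $SC_i$, $SC_i^h$ being its block at height $h$; each block carries a publicly verifiable block timestamp $f_{bt}(\cdot)$, strictly increasing with height within a shard; $f_{idx}(\cdot)$ gives a transaction's index in its block. $TX_{\mapsto\epsilon}$ denotes a transaction calling contract $\epsilon$; $\Upsilon(TX_{\mapsto\epsilon})$ is the set of contracts called when executing $\epsilon$, and $TX_{\mapsto\epsilon,\epsilon_k}$ the sub-transaction calling $\epsilon_k$. Processing order: $TX^1\prec_{\mathbf P}TX^2$ if (i) both are in the same block and $f_{idx}(TX^1)<f_{idx}(TX^2)$, or (ii) $TX^1\in SC_i^m$, $TX^2\in SC_i^n$ with $m<n$, or (iii) $TX^1\in SC_i^m$, $TX^2\in SC_j^n$ with $f_{bt}(SC_i^m)<f_{bt}(SC_j^n)$. Execution order: $TX^1_{\mapsto\epsilon_1}\prec_{\mathbf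 E}TX^2_{\mapsto\epsilon_2}$ if for every $\epsilon_k\in\Upsilon(TX^1_{\mapsto\epsilon_1})\cap\Upsilon(TX^2_{\mapsto\epsilon_2})$ the sub-transaction $TX^1_{\mapsto\epsilon_1,\epsilon_k}$ is executed before $TX^2_{\mapsto\epsilon_2,\epsilon_k}$. Haechi protocol for order-sensitive-contract transactions (OTXs): (1) Processing: a sender shard processes an OTX (e.g. withdraws the sender's funds) in a block, and for each block at height $h$ sends the beacon chain a certified CrossLink $\langle blockTS, L_{tx}, i, h\rangle$ containing the block's valid new OTXs in block order. (2) Ordering: the beacon chain keeps, for each shard $i$, a sequence $shardCLs[i]$ of received CrossLinks of consecutive heights (out-of-order ones buffered), and $shardLastTS[i]$, the timestamp of its last element; once all $shardCLs[i]$ are nonempty, it selects the CrossLinks with $blockTS\le\min_i shardLastTS[i]$ and orders their OTXs by block timestamp, then by index in the CrossLink, agreeing on this via BFT consensus, and sends to each contract shard the ordered list of OTXs calling its contracts. (3) Execution: contract shards execute the called contracts in the received order. (4) Commitment: the sender shard commits or aborts each OTX based on execution results and notifies involved shards. *)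

theory Defs
  imports Complex_Main
begin

text \<open>
Sender shards are 1..m.  blk i h is the list L_tx of valid new OTXs of block SC_i^h
(in block order, so list position order = f_idx order); ts i h = f_bt(SC_i^h).
A position is a triple (i, h, k): shard, height, index in the block.
\<close>

definition valid_pos :: "nat \<Rightarrow> (nat \<Rightarrow> nat \<Rightarrow> 'tx list) \<Rightarrow> nat \<times> nat \<times> nat \<Rightarrow> bool" where
  "valid_pos m blk p = (case p of (i, h, k) \<Rightarrow> 1 \<le> i \<and> i \<le> m \<and> k < length (blk i h))"

definition tx_at :: "(nat \<Rightarrow> nat \<Rightarrow> 'tx list) \<Rightarrow> nat \<times> nat \<times> nat \<Rightarrow> 'tx" where
  "tx_at blk p = (case p of (i, h, k) \<Rightarrow> blk i h ! k)"

definition unique_positions :: "nat \<Rightarrow> (nat \<Rightarrow> nat \<Rightarrow> 'tx list) \<Rightarrow> bool" where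
  "unique_positions m blk = (\<forall>p q. valid_pos m blk p \<and> valid_pos m blk q \<and> tx_at blk p = tx_at blk q \<longrightarrow> p = q)"

definition proc_before :: "nat \<Rightarrow> (nat \<Rightarrow> nat \<Rightarrow> real) \<Rightarrow> (nat \<Rightarrow> nat \<Rightarrow> 'tx list) \<Rightarrow> 'tx \<Rightarrow> 'tx \<Rightarrow> bool" where
  "proc_before m ts blk tx1 tx2 =
     (\<exists>i h k j h' k'. valid_pos m blk (i, h, k) \<and> valid_pos m blk (j, h', k') \<and>
        tx_at blk (i, h, k) = tx1 \<and> tx_at blk (j, h', k') = tx2 \<and>
        ((i = j \<and> h = h' \<and> k < k') \<or> (i = j \<and> h < h') \<or> ts i h < ts j h'))"

text \<open>Beacon chain: at round r it has received CrossLinks of heights 0..<n r i of each shard i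
(consecutive heights; nonempty). Threshold = min_i shardLastTS[i].\<close>
definition threshold :: "nat \<Rightarrow> (nat \<Rightarrow> nat \<Rightarrow> real) \<Rightarrow> (nat \<Rightarrow> nat \<Rightarrow> nat) \<Rightarrow> nat \<Rightarrow> real" where
  "threshold m ts n r = Min ((\<lambda>i. ts i (n r i - 1)) ` {1..m})"

definition eligible :: "nat \<Rightarrow> (nat \<Rightarrow> nat \<Rightarrow> real) \<Rightarrow> (nat \<Rightarrow> nat \<Rightarrow> nat) \<Rightarrow> nat \<Rightarrow> (nat \<times> nat) set" where
  "eligible m ts n r = {(i, h). 1 \<le> i \<and> i \<le> m \<and> h < n r i \<and> ts i h \<le> threshold m ts n r}"

definition selected :: "nat \<Rightarrow> (nat \<Rightarrow> nat \<Rightarrow> real) \<Rightarrow> (nat \<Rightarrow> nat \<Rightarrow> nat) \<Rightarrow> nat \<Rightarrow> (nat \<times> nat) set" where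
  "selected m ts n r = eligible m ts n r - (\<Union>r'<r. eligible m ts n r')"

definition key_le :: "(nat \<Rightarrow> nat \<Rightarrow> real) \<Rightarrow> nat \<times> nat \<times> nat \<Rightarrow> nat \<times> nat \<times> nat \<Rightarrow> bool" where
  "key_le ts p q = (case p of (i, h, k) \<Rightarrow> case q of (j, h', k') \<Rightarrow>
       ts i h < ts j h' \<or> (ts i h = ts j h' \<and> k \<le> k'))"

definition haechi_run :: "nat \<Rightarrow> (nat \<Rightarrow> nat \<Rightarrow> real) \<Rightarrow> (nat \<Rightarrow> nat \<Rightarrow> 'tx list)
      \<Rightarrow> (nat \<Rightarrow> nat \<Rightarrow> nat) \<Rightarrow> nat \<Rightarrow> (nat \<Rightarrow> (nat \<times> nat \<times> nat) list) \<Rightarrow> bool" where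
  "haechi_run m ts blk n R L =
     ((\<forall>r i. n r i \<le> n (Suc r) i) \<and>
      (\<forall>r<R. \<forall>i\<in>{1..m}. 1 \<le> n r i) \<and>
      (\<forall>r<R. distinct (L r) \<and>
         set (L r) = {(i, h, k). (i, h) \<in> selected m ts n r \<and> k < length (blk i h)} \<and>
         sorted_wrt (key_le ts) (L r)))"

definition global_order :: "(nat \<Rightarrow> nat \<Rightarrow> 'tx list) \<Rightarrow> nat \<Rightarrow> (nat \<Rightarrow> (nat \<times> nat \<times> nat) list) \<Rightarrow> 'tx list" where
  "global_order blk R L = concat (map (\<lambda>r. map (tx_at blk) (L r)) [0..<R])"

text \<open>Contract shard hosting contract c receives the OTXs calling c, in order, and executes them in that order.\<close>
definition received :: "('tx \<Rightarrow> 'c set) \<Rightarrow> 'tx list \<Rightarrow> 'c \<Rightarrow> 'tx list" where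
  "received Ups G c = filter (\<lambda>tx. c \<in> Ups tx) G"

definition executed_before :: "('tx \<Rightarrow> 'c set) \<Rightarrow> 'tx list \<Rightarrow> 'c \<Rightarrow> 'tx \<Rightarrow> 'tx \<Rightarrow> bool" where
  "executed_before Ups G c tx1 tx2 =
     (\<exists>p q. p < q \<and> q < length (received Ups G c) \<and>
        received Ups G c ! p = tx1 \<and> received Ups G c ! q = tx2)"

definition exec_before :: "('tx \<Rightarrow> 'c set) \<Rightarrow> 'tx list \<Rightarrow> 'tx \<Rightarrow> 'tx \<Rightarrow> bool" where
  "exec_before Ups G tx1 tx2 = (\<forall>c \<in> Ups tx1 \<inter> Ups tx2. executed_before Ups G c tx1 tx2)"

end

theory Submission
  imports Defs
begin

lemma filt_lemma:
  assumes "xs = ys @ a # zs" "b \<in> set zs" "P a" "P b"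
  shows "\<exists>p q. p < q \<and> q < length (filter P xs) \<and> filter P xs ! p = a \<and> filter P xs ! q = b"
proof -
  have "b \<in> set (filter P zs)" using assms by simp
  then obtain t where t: "t < length (filter P zs)" "filter P zs ! t = b"
    by (metis in_set_conv_nth)
  have fx: "filter P xs = filter P ys @ a # filter P zs" using assms by simp
  show ?thesis
    apply (rule exI[of _ "length (filter P ys)"], rule exI[of _ "length (filter P ys) + Suc t"])
    using t fx by (simp add: nth_append)
qed

lemma split_G:
  assumes "r < R"
  shows "global_order blk R L = concat (map (\<lambda>r. map (tx_at blk) (L r)) [0..<r])
           @ map (tx_at blk) (L r) @ concat (map (\<lambda>r. map (tx_at blk) (L r)) [Suc r..<R])"
proof -
  have "[0..<R] = [0..<r] @ [r..<R]"
    by (metis assms le_add_same_cancel1 less_imp_le_nat upt_add_eq_append zero_le le_add_diff_inverse)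
  also have "[r..<R] = r # [Suc r..<R]" using assms upt_conv_Cons by blast
  finally show ?thesis unfolding global_order_def by simp
qed

theorem theorem1:
  fixes m :: nat and ts :: "nat \<Rightarrow> nat \<Rightarrow> real" and blk :: "nat \<Rightarrow> nat \<Rightarrow> 'tx list"
    and n :: "nat \<Rightarrow> nat \<Rightarrow> nat" and R :: nat and L :: "nat \<Rightarrow> (nat \<times> nat \<times> nat) list"
    and Ups :: "'tx \<Rightarrow> 'c set" and \<epsilon> :: 'c and tx1 tx2 :: 'tx
  assumes "1 \<le> m"
    and "\<forall>i h. ts i h < ts i (Suc h)"
    and "unique_positions m blk"
    and "haechi_run m ts blk n R L"
    and "tx1 \<in> set (global_order blk R L)" and "tx2 \<in> set (global_order blk R L)"
    and "\<epsilon> \<in> Ups tx1 \<inter> Ups tx2"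
    and "proc_before m ts blk tx1 tx2"
  shows "exec_before Ups (global_order blk R L) tx1 tx2"
proof -
  note run = assms(4)[unfolded haechi_run_def]
  have sm: "strict_mono (ts i)" for i using assms(2) by (simp add: strict_mono_Suc_iff)
  have sel_valid: "valid_pos m blk p" if "r < R" "p \<in> set (L r)" for r p
    using run that by (auto simp: valid_pos_def selected_def eligible_def)
  obtain r1 q1 where r1: "r1 < R" "q1 \<in> set (L r1)" "tx_at blk q1 = tx1"
    using assms(5) by (auto simp: global_order_def)
  obtain r2 q2 where r2: "r2 < R" "q2 \<in> set (L r2)" "tx_at blk q2 = tx2"
    using assms(6) by (auto simp: global_order_def)
  obtain i h k j h' k' where pb: "valid_pos m blk (i, h, k)" "valid_pos m blk (j, h', k')"
     "tx_at blk (i, h, k) = tx1" "tx_at blk (j, h', k') = tx2"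
     "(i = j \<and> h = h' \<and> k < k') \<or> (i = j \<and> h < h') \<or> ts i h < ts j h'"
    using assms(8) unfolding proc_before_def by blast
  have q1: "q1 = (i, h, k)" using assms(3) pb r1 sel_valid unfolding unique_positions_def by blast
  have q2: "q2 = (j, h', k')" using assms(3) pb r2 sel_valid unfolding unique_positions_def by blast
  have tsle: "ts i h \<le> ts j h'"
    using pb(5) sm by (auto simp: strict_mono_less strict_mono_less_eq less_imp_le)
  have s1: "(i, h) \<in> selected m ts n r1" using run r1 q1 by auto
  have s2: "(j, h') \<in> selected m ts n r2" using run r2 q2 by auto
  have not_lt: "\<not> r2 < r1"
  proof
    assume lt: "r2 < r1"
    have e2: "(j, h') \<in> eligible m ts n r2" using s2 by (simp add: selected_def)
    have i1: "i \<in> {1..m}" using pb(1) by (simp add: valid_pos_def)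
    have "threshold m ts n r2 \<le> ts i (n r2 i - 1)"
      unfolding threshold_def using i1 by (intro Min_le) auto
    hence "ts i h \<le> ts i (n r2 i - 1)" using tsle e2 by (auto simp: eligible_def)
    hence "h \<le> n r2 i - 1" using sm by (simp add: strict_mono_less_eq)
    moreover have "1 \<le> n r2 i" using run r2(1) i1 by auto
    ultimately have "h < n r2 i" by linarith
    hence "(i, h) \<in> eligible m ts n r2"
      using i1 tsle e2 by (auto simp: eligible_def)
    thus False using s1 lt by (auto simp: selected_def)
  qed
  let ?f = "\<lambda>r. map (tx_at blk) (L r)"
  have dec: "\<exists>ys zs. global_order blk R L = ys @ tx1 # zs \<and> tx2 \<in> set zs"
  proof (cases "r1 = r2")
    case True
    obtain as bs where L1: "L r1 = as @ q1 # bs" using r1(2) by (meson split_list)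
    have "q2 \<in> set bs"
    proof -
      have "q2 \<noteq> q1"
      proof
        assume "q2 = q1"
        thus False using pb(5) q1 q2 by auto
      qed
      moreover have "q2 \<notin> set as"
      proof
        assume "q2 \<in> set as"
        hence "key_le ts q2 q1" using run r1(1) L1 by (auto simp: sorted_wrt_append)
        moreover have "ts i h < ts j h' \<or> (i = j \<and> h = h' \<and> k < k')"
          proof -
          have "i = j \<and> h < h' \<Longrightarrow> ts i h < ts j h'" using sm[of i] by (simp add: strict_monoD)
          thus ?thesis using pb(5) by blast
        qed
        ultimately show False unfolding q1 q2 key_le_def by auto
      qed
      ultimately show ?thesis using r2(2) True L1 by auto
    qed
    hence "tx2 \<in> set (map (tx_at blk) bs)" using r2(3) by auto
    thus ?thesis using split_G[OF r1(1), of blk L] L1 r1(3)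
      by (intro exI[of _ "concat (map ?f [0..<r1]) @ map (tx_at blk) as"]
                exI[of _ "map (tx_at blk) bs @ concat (map ?f [Suc r1..<R])"]) simp
  next
    case False
    hence lt: "r1 < r2" using not_lt by simp
    have "tx1 \<in> set (?f r1)" using r1 by auto
    then obtain as bs where F1: "?f r1 = as @ tx1 # bs" by (meson split_list)
    have "tx2 \<in> set (concat (map ?f [Suc r1..<R]))" using lt r2 by auto
    thus ?thesis using split_G[OF r1(1), of blk L] F1
      by (intro exI[of _ "concat (map ?f [0..<r1]) @ as"]
                exI[of _ "bs @ concat (map ?f [Suc r1..<R])"]) simp
  qed
  then obtain ys zs where yz: "global_order blk R L = ys @ tx1 # zs" "tx2 \<in> set zs" by blast
  show ?thesis
    unfolding exec_before_def executed_before_def received_def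
  proof (intro ballI)
    fix c assume "c \<in> Ups tx1 \<inter> Ups tx2"
    thus "\<exists>p q. p < q \<and> q < length (filter (\<lambda>tx. c \<in> Ups tx) (global_order blk R L)) \<and>
            filter (\<lambda>tx. c \<in> Ups tx) (global_order blk R L) ! p = tx1 \<and>
            filter (\<lambda>tx. c \<in> Ups tx) (global_order blk R L) ! q = tx2"
      by (intro filt_lemma[OF yz]) auto
  qed
qed

end
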